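(* Let $\varphi=\frac{1+\sqrt5}{2}$, $\theta_0=\left(\frac12,\frac1\varphi,\frac1{\varphi^2}\right)$ and $m=(0,\frac12,\frac12)$. Then the language $\mathcal L'_m$ has complexity function $2n+1$ for all $n\ge0$, and the language $\mathcal L_m=\mathcal L_{m,\theta_0}$ has complexity function $2n+3$ for all $n\ge 2$.
   Context: $f_{\theta_0}(m)\in\{a,b,c\}^{\mathbb N}$ records, in order, the successive intersections of the half line $m+\mathbb R_+\theta_0$ with the planes $X=n$ (letter $a$), $Y=n$ (letter $b$), $Z=n$ (letter $c$), $n\in\mathbb Z$; $\mathcal L_m$ is its set of finite factors. The complexity function of a language counts its words of length $n$. The face $X=0$ is identified with $(\mathbb R/\mathbb Z)^2$ via $(y,z)$ and partitioned, up to boundaries, into seven sets, for $(y,z)\in[0,1)^2$: $P_{a_7}$: $y<4-2\varphi,\ z<2\varphi-3$; $P_{a_4}$: $y>4-2\varphi,\ z<2\varphi-3$; $P_{a_2}$: $y<4-2\varphi,\ 2\varphi-3<z<(2-\varphi)+y/\varphi$; $P_{a_1}$: $y<4-2\varphi,\ z>(2-\varphi)+y/\varphi$; $P_{a_5}$: $y>4-2\varphi,\ 2\varphi-3<z<(3-2\varphi)+y/\varphi$; $P_{a_3}$: $y>4-2\varphi,\ (3-2\varphi)+y/\varphi<z<(2-\varphi)+y/\varphi$; $P_{a_6}$: $y>4-2\varphi,\ z>(2-\varphi)+y/\varphi$. $v=v_0v_1v_2\cdots\in\{a_1,\dots,a_7\}^{\mathbb N}$ is defined by $v_k=a_i$ iff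 $m+\frac{2k}{\varphi}(1,-1)\bmod 1\in P_{a_i}$ (the coding of the translation $s\mapsto s+\frac2\varphi\bmod 1$ on the circle through $m$ in direction $(1,-1)$ by the pieces it crosses); one has $f_{\theta_0}(m)=\Phi(v)$ where $\Phi$ is the morphism $\Phi(a_1)=acb$, $\Phi(a_2)=abc$, $\Phi(a_3)=abcb$, $\Phi(a_4)=abb$, $\Phi(a_5)=abbc$, $\Phi(a_6)=acbb$, $\Phi(a_7)=ab$. $\mathcal L'_m$ is the set of finite factors of $v$. *)

theory Defs
  imports Complex_Main
begin

datatype abc = LA | LB | LC

definition phi :: real where "phi = (1 + sqrt 5) / 2"

type_synonym point3 = "real \<times> real \<times> real"

definition theta0 :: point3 where "theta0 = (1/2, 1/phi, 1/phi^2)"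
definition m0 :: point3 where "m0 = (0, 1/2, 1/2)"

definition pt3 :: "point3 \<Rightarrow> point3 \<Rightarrow> real \<Rightarrow> point3" where
  "pt3 m \<theta> t = (fst m + t * fst \<theta>, fst (snd m) + t * fst (snd \<theta>),
                  snd (snd m) + t * snd (snd \<theta>))"

definition crossing_times :: "point3 \<Rightarrow> point3 \<Rightarrow> real set" where
  "crossing_times m \<theta> = {t. t \<ge> 0 \<and>
     (fst (pt3 m \<theta> t) \<in> \<int> \<or> fst (snd (pt3 m \<theta> t)) \<in> \<int> \<or> snd (snd (pt3 m \<theta> t)) \<in> \<int>)}"

definition crossing_letter :: "point3 \<Rightarrow> point3 \<Rightarrow> real \<Rightarrow> abc" where
  "crossing_letter m \<theta> t =
     (if fst (pt3 m \<theta> t) \<in> \<int> then LA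
      else if fst (snd (pt3 m \<theta> t)) \<in> \<int> then LB else LC)"

definition billiard_word :: "point3 \<Rightarrow> point3 \<Rightarrow> nat \<Rightarrow> abc" where
  "billiard_word m \<theta> k = crossing_letter m \<theta>
     (THE t. t \<in> crossing_times m \<theta> \<and> card {s \<in> crossing_times m \<theta>. s < t} = k)"

definition factors :: "(nat \<Rightarrow> 'a) \<Rightarrow> 'a list set" where
  "factors w = {u. \<exists>i. u = map w [i..<i + length u]}"

definition complexity :: "'a list set \<Rightarrow> nat \<Rightarrow> nat" where
  "complexity L n = card {u \<in> L. length u = n}"

text \<open>Pieces of the face X=0, in coordinates (y,z) \<in> [0,1)^2, indexed by i = 1..7.\<close>
definition piece :: "nat \<Rightarrow> (real \<times> real) set" where
  "piece i = {(y,z). 0 \<le> y \<and> y < 1 \<and> 0 \<le> z \<and> z < 1 \<and>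
     (if i = 7 then y < 4 - 2*phi \<and> z < 2*phi - 3
      else if i = 4 then y > 4 - 2*phi \<and> z < 2*phi - 3
      else if i = 2 then y < 4 - 2*phi \<and> 2*phi - 3 < z \<and> z < (2 - phi) + y/phi
      else if i = 1 then y < 4 - 2*phi \<and> z > (2 - phi) + y/phi
      else if i = 5 then y > 4 - 2*phi \<and> 2*phi - 3 < z \<and> z < (3 - 2*phi) + y/phi
      else if i = 3 then y > 4 - 2*phi \<and> (3 - 2*phi) + y/phi < z \<and> z < (2 - phi) + y/phi
      else if i = 6 then y > 4 - 2*phi \<and> z > (2 - phi) + y/phi
      else False)}"

definition face_point :: "point3 \<Rightarrow> nat \<Rightarrow> real \<times> real" where
  "face_point m k = (frac (fst (snd m) + 2 * real k / phi), frac (snd (snd m) - 2 * real k / phi))"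

text \<open>v_k = a_i iff the point lies in P_{a_i}; the letter a_i is represented by i.\<close>
definition v_word :: "point3 \<Rightarrow> nat \<Rightarrow> nat" where
  "v_word m k = (THE i. i \<in> {1..7} \<and> face_point m k \<in> piece i)"

end

theory Submission
  imports Defs "HOL-Analysis.Kronecker_Approximation_Theorem" "HOL-Computational_Algebra.Primes"
begin


lemma sqrt5_irrat: "sqrt 5 \<notin> \<rat>"
proof
  have p: "prime (5::nat)" by simp
  assume "sqrt 5 \<in> \<rat>"
  then obtain m n :: nat
    where n: "n \<noteq> 0" and sq: "\<bar>sqrt 5\<bar> = m / n" and cop: "coprime m n"
    by (rule Rats_abs_nat_div_natE)
  have "real m = sqrt 5 * n" using n sq by (simp add: field_simps)
  then have "real (m^2) = real (5 * n^2)" by (simp add: power_mult_distrib)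
  then have eq: "m^2 = 5 * n^2" by (simp only: of_nat_eq_iff)
  then have "5 dvd m^2" by simp
  then have d1: "5 dvd m" using p prime_dvd_power by blast
  then obtain k where "m = 5 * k" ..
  with eq have "n^2 = 5 * k^2" by (simp add: power2_eq_square)
  then have "5 dvd n^2" by simp
  then have "5 dvd n" using p prime_dvd_power by blast
  with d1 cop show False
    by (metis coprime_common_divisor_nat numeral_eq_one_iff semiring_norm(86))
qed

lemma sqrt5_lin:
  assumes "a \<in> \<rat>" "b \<in> \<rat>" "a + b * sqrt 5 \<in> \<rat>" shows "b = 0"
proof (rule ccontr)
  assume "b \<noteq> 0"
  then have "sqrt 5 = ((a + b * sqrt 5) - a) / b" by simp
  also have "\<dots> \<in> \<rat>" using assms by (intro Rats_divide Rats_diff) auto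
  finally show False using sqrt5_irrat by simp
qed

definition s5 :: real where "s5 = sqrt 5"
definition gam :: real where "gam = 2 / phi"
definition bet :: real where "bet = 1 / phi^2"

lemma s5_sq: "s5 * s5 = 5" unfolding s5_def by simp
lemma s5_bounds: "2.236 < s5" "s5 < 2.2361"
proof -
  have "sqrt (2.236^2) < sqrt 5" by (subst real_sqrt_less_iff) (simp add: power2_eq_square)
  then show "2.236 < s5" unfolding s5_def by simp
  have "sqrt 5 < sqrt (2.2361^2)" by (subst real_sqrt_less_iff) (simp add: power2_eq_square)
  then show "s5 < 2.2361" unfolding s5_def by simp
qed

lemma phi_s5: "phi = (1 + s5) / 2" unfolding phi_def s5_def ..
lemma phi_pos: "phi > 0" using s5_bounds phi_s5 by simp
lemma gam_s5: "gam = s5 - 1"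
proof -
  have "(s5 - 1) * phi = 2" unfolding phi_s5 using s5_sq by (simp add: algebra_simps)
  then show ?thesis unfolding gam_def using phi_pos by (simp add: field_simps)
qed
lemma bet_s5: "bet = (3 - s5) / 2"
proof -
  have "((3 - s5) / 2) * phi^2 = 1" unfolding phi_s5 power2_eq_square using s5_sq by (simp add: field_simps)
  then show ?thesis unfolding bet_def using phi_pos by (simp add: field_simps)
qed

lemma s5_Rats_zero: "a \<in> \<rat> \<Longrightarrow> b \<in> \<rat> \<Longrightarrow> a + b * s5 \<in> \<int> \<Longrightarrow> b = 0"
  using sqrt5_lin Ints_subset_Rats unfolding s5_def by blast

lemma bet_pos: "0 < bet" and bet_small: "2 * bet < 1" and gam_bet: "gam + 2 * bet = 2"
  and gam_gt1: "1 < gam" and gam_lt2: "gam < 2"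
  using s5_bounds unfolding bet_s5 gam_s5 by (auto simp: field_simps)

definition sig :: "nat \<Rightarrow> real" where
  "sig f = real (f div 2) * gam - real (f mod 2) * bet"
definition FF :: "nat \<Rightarrow> real \<Rightarrow> int" where
  "FF f x = \<lfloor>x + sig f\<rfloor>"
definition fA :: "nat \<Rightarrow> real \<Rightarrow> bool" where
  "fA j x \<longleftrightarrow> frac (x + real j * gam) < bet"
definition fB :: "nat \<Rightarrow> real \<Rightarrow> bool" where
  "fB j x \<longleftrightarrow> bet \<le> frac (x + real j * gam) \<and> frac (x + real j * gam) < 2 * bet"
definition ob :: "nat \<Rightarrow> real \<Rightarrow> bool" where
  "ob e x = (if even e then fA (e div 2) x else fB (e div 2) x)"
definition lowbit :: "nat \<Rightarrow> int" where
  "lowbit e = (if even e then -1 else 1)"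

lemma floor_minus_b:
  fixes w b :: real
  assumes "0 < b" "b < 1"
  shows "\<lfloor>w - b\<rfloor> = (if frac w < b then \<lfloor>w\<rfloor> - 1 else \<lfloor>w\<rfloor>)"
proof -
  have w: "w = real_of_int \<lfloor>w\<rfloor> + frac w" by (simp add: frac_def)
  have f: "0 \<le> frac w" "frac w < 1" by (auto simp: frac_lt_1)
  show ?thesis
  proof (cases "frac w < b")
    case True
    have "\<lfloor>w - b\<rfloor> = \<lfloor>w\<rfloor> - 1"
      by (subst floor_eq_iff) (use True f assms w in linarith)
    then show ?thesis using True by simp
  next
    case False
    have "\<lfloor>w - b\<rfloor> = \<lfloor>w\<rfloor>"
      by (subst floor_eq_iff) (use False f assms w in linarith)
    then show ?thesis using False by simp
  qed
qed

lemma frac_minus_b: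
  fixes w b :: real
  assumes "0 < b" "2 * b < 1"
  shows "frac (w - b) < b \<longleftrightarrow> b \<le> frac w \<and> frac w < 2 * b"
proof -
  have e: "frac (w - b) = w - b - \<lfloor>w - b\<rfloor>" by (simp add: frac_def)
  have w: "w = real_of_int \<lfloor>w\<rfloor> + frac w" by (simp add: frac_def)
  have f: "0 \<le> frac w" "frac w < 1" by (auto simp: frac_lt_1)
  have fl: "\<lfloor>w - b\<rfloor> = (if frac w < b then \<lfloor>w\<rfloor> - 1 else \<lfloor>w\<rfloor>)"
    using floor_minus_b[of b w] assms by auto
  show ?thesis
  proof (cases "frac w < b")
    case True
    then have "frac (w - b) = frac w - b + 1" using e fl w by simp
    then show ?thesis using True f assms by linarith
  next
    case False
    then show ?thesis using e fl w f assms by auto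
  qed
qed

lemma ob_floor:
  "FF (Suc e) x - FF e x = lowbit e \<or> FF (Suc e) x - FF e x = lowbit e + 1"
  "ob e x \<longleftrightarrow> FF (Suc e) x - FF e x = lowbit e"
proof -
  have bb: "0 < bet" "bet < 1" using bet_pos bet_small by auto
  have "(FF (Suc e) x - FF e x = lowbit e \<or> FF (Suc e) x - FF e x = lowbit e + 1) \<and>
        (ob e x \<longleftrightarrow> FF (Suc e) x - FF e x = lowbit e)"
  proof (cases "even e")
    case True
    then obtain j where e: "e = 2 * j" by blast
    have s1: "x + sig (Suc e) = (x + real j * gam) - bet" and s0: "x + sig e = x + real j * gam"
      unfolding sig_def e by auto
    show ?thesis unfolding FF_def s1 s0 ob_def lowbit_def fA_def using e
      floor_minus_b[OF bb, of "x + real j * gam"] by auto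
  next
    case False
    then obtain j where e: "e = 2 * j + 1" by (metis oddE)
    have s1: "x + sig (Suc e) = ((x + real j * gam - bet) - bet) + 2"
      and s0: "x + sig e = x + real j * gam - bet"
      unfolding sig_def e using gam_bet by (auto simp: algebra_simps)
    have fl: "\<lfloor>((x + real j * gam - bet) - bet) + 2\<rfloor> = \<lfloor>(x + real j * gam - bet) - bet\<rfloor> + 2"
      by (metis floor_add_int of_int_numeral)
    have fb: "fB j x \<longleftrightarrow> frac ((x + real j * gam) - bet) < bet"
      unfolding fB_def using frac_minus_b[OF bet_pos bet_small] by auto
    show ?thesis unfolding FF_def s1 s0 ob_def lowbit_def fl using e fb
      floor_minus_b[OF bb, of "x + real j * gam - bet"] by auto
  qed
  then show "FF (Suc e) x - FF e x = lowbit e \<or> FF (Suc e) x - FF e x = lowbit e + 1"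
    "ob e x \<longleftrightarrow> FF (Suc e) x - FF e x = lowbit e" by auto
qed

lemma FF_shift_int: "FF f (x + of_int m) = FF f x + m"
  unfolding FF_def by (metis add.commute add.left_commute floor_add_int)

lemma ob_shift_int: "ob e (x + of_int m) = ob e x"
  by (simp add: ob_floor(2) FF_shift_int)


lemma count_cells:
  fixes G :: "real \<Rightarrow> 'b" and K :: "real set" and orb :: "nat \<Rightarrow> real"
  assumes per: "\<And>x m. G (x + of_int m) = G x"
    and Kper: "\<And>x m. x \<in> K \<Longrightarrow> x + of_int m \<in> K"
    and fin: "finite (K \<inter> {0..<1})" and ne: "K \<inter> {0..<1} \<noteq> {}"
    and B: "\<And>x y. x \<le> y \<Longrightarrow> y < x + 1 \<Longrightarrow> (\<And>c. c \<in> K \<Longrightarrow> x < c \<Longrightarrow> c \<le> y \<Longrightarrow> False) \<Longrightarrow> G x = G y"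
    and I: "\<And>x y. x \<in> K \<Longrightarrow> y \<in> K \<Longrightarrow> x < y \<Longrightarrow> y < x + 1 \<Longrightarrow> G x \<noteq> G y"
    and D: "\<And>a b. 0 \<le> a \<Longrightarrow> a < b \<Longrightarrow> b \<le> 1 \<Longrightarrow> \<exists>k. a < frac (orb k) \<and> frac (orb k) < b"
  shows "card (range (\<lambda>k. G (orb k))) = card (K \<inter> {0..<1})"
proof -
  define K0 where "K0 = K \<inter> {0..<1}"
  have pfrac: "G (frac x) = G x" for x
    using per[of x "- \<lfloor>x\<rfloor>"] by (simp add: frac_def)
  have sub1: "G (orb k) \<in> G ` K0" for k
  proof -
    define y where "y = frac (orb k)"
    have y: "0 \<le> y" "y < 1" unfolding y_def by (auto simp: frac_lt_1)
    have Gy: "G (orb k) = G y" unfolding y_def by (simp add: pfrac)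
    show ?thesis
    proof (cases "{c\<in>K0. c \<le> y} = {}")
      case False
      define c where "c = Max {c\<in>K0. c \<le> y}"
      have fS: "finite {c\<in>K0. c \<le> y}" by (rule finite_subset[OF _ fin]) (auto simp: K0_def)
      have cS: "c \<in> {c\<in>K0. c \<le> y}" unfolding c_def using Max_in[OF fS False] .
      have cmax: "c'' \<le> c" if "c'' \<in> K0" "c'' \<le> y" for c''
        unfolding c_def using Max_ge[OF fS] that by auto
      have "G c = G y"
      proof (rule B)
        show "c \<le> y" using cS by auto
        show "y < c + 1" using cS y unfolding K0_def by auto
        fix c'' assume "c'' \<in> K" "c < c''" "c'' \<le> y"
        then have "c'' \<in> K0" using cS y unfolding K0_def by auto
        then show False using cmax \<open>c < c''\<close> \<open>c'' \<le> y\<close> by fastforce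
      qed
      then show ?thesis using Gy cS by (metis (no_types, lifting) image_eqI mem_Collect_eq)
    next
      case True
      define c where "c = Max K0"
      have fK: "finite K0" using fin unfolding K0_def by simp
      have ne0: "K0 \<noteq> {}" using ne unfolding K0_def by simp
      have cK: "c \<in> K0" unfolding c_def using Max_in[OF fK ne0] .
      have cmax: "c'' \<le> c" if "c'' \<in> K0" for c'' unfolding c_def using Max_ge[OF fK] that by auto
      have cy: "y < c" using True cK by force
      have "G (c + of_int (-1)) = G y"
      proof (rule B)
        show "c + of_int (-1) \<le> y" using cK y unfolding K0_def by auto
        show "y < c + of_int (-1) + 1" using cy by simp
        fix c'' assume c'': "c'' \<in> K" "c + of_int (-1) < c''" "c'' \<le> y"
        show False
        proof (cases "0 \<le> c''")
          case True
          then have "c'' \<in> K0" using c'' y unfolding K0_def by auto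
          then show False using \<open>{c\<in>K0. c \<le> y} = {}\<close> c'' by auto
        next
          case False
          have "c'' + of_int 1 \<in> K" using Kper c'' by blast
          then have "c'' + 1 \<in> K0" using False c'' cK unfolding K0_def by auto
          then show False using cmax c'' by fastforce
        qed
      qed
      moreover have "G (c + of_int (-1)) = G c" by (rule per)
      ultimately show ?thesis using Gy cK by (metis image_eqI)
    qed
  qed
  have sub2: "G c \<in> range (\<lambda>k. G (orb k))" if cK: "c \<in> K0" for c
  proof -
    define U where "U = {c'\<in>K0. c < c'}"
    define d where "d = (if U = {} then 1 else Min U)"
    have fU: "finite U" by (rule finite_subset[OF _ fin]) (auto simp: K0_def U_def)
    have dU: "d \<le> c'" if "c' \<in> U" for c' unfolding d_def using that Min_le[OF fU] by auto
    have cd: "c < d" "d \<le> 1"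
    proof -
      show "c < d"
      proof (cases "U = {}")
        case True then show ?thesis using cK unfolding d_def K0_def by auto
      next
        case False then show ?thesis using Min_in[OF fU False] unfolding d_def U_def by auto
      qed
      show "d \<le> 1"
      proof (cases "U = {}")
        case True then show ?thesis unfolding d_def by auto
      next
        case False then show ?thesis using Min_in[OF fU False] unfolding d_def U_def K0_def by auto
      qed
    qed
    obtain k where k: "c < frac (orb k)" "frac (orb k) < d"
      using D[of c d] cK cd unfolding K0_def by auto
    have "G c = G (frac (orb k))"
    proof (rule B)
      show "c \<le> frac (orb k)" using k by simp
      show "frac (orb k) < c + 1" using cK frac_lt_1[of "orb k"] unfolding K0_def by auto
      fix c'' assume c'': "c'' \<in> K" "c < c''" "c'' \<le> frac (orb k)"
      then have "c'' \<in> U" using cK frac_lt_1[of "orb k"] unfolding U_def K0_def by auto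
      then show False using dU c'' k by fastforce
    qed
    then show ?thesis by (simp add: pfrac)
  qed
  have eq: "range (\<lambda>k. G (orb k)) = G ` K0" using sub1 sub2 by blast
  have inj: "inj_on G K0"
  proof (rule inj_onI)
    fix x y assume xy: "x \<in> K0" "y \<in> K0" "G x = G y"
    show "x = y"
    proof (rule ccontr)
      assume "x \<noteq> y"
      then consider "x < y" | "y < x" by linarith
      then show False
      proof cases
        case 1 then show False using I[of x y] xy unfolding K0_def by auto
      next
        case 2 then show False using I[of y x] xy unfolding K0_def by auto
      qed
    qed
  qed
  show ?thesis unfolding eq K0_def[symmetric] using card_image[OF inj] .
qed


definition Obs :: "nat \<Rightarrow> nat \<Rightarrow> real \<Rightarrow> bool list" where
  "Obs e0 e1 x = map (\<lambda>e. ob e x) [e0..<Suc e1]"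
definition cutK :: "nat \<Rightarrow> nat \<Rightarrow> real set" where
  "cutK e0 e1 = {c. \<exists>f\<in>{e0..Suc e1}. c + sig f \<in> \<int>}"
definition orb :: "nat \<Rightarrow> real" where
  "orb k = 1/2 + real k * gam"

lemma sig_form: "sig f = (- real (f div 2) - 3 * real (f mod 2) / 2) + s5 * (real f / 2)"
proof -
  define A where "A = real (f div 2)"
  define B where "B = real (f mod 2)"
  have e: "real f = 2 * A + B" unfolding A_def B_def
    by (metis of_nat_add of_nat_mult of_nat_numeral div_mult_mod_eq mult.commute)
  have "sig f = A * (s5 - 1) - B * ((3 - s5) / 2)" unfolding sig_def gam_s5 bet_s5 A_def B_def by simp
  also have "\<dots> = (- A - 3 * B / 2) + s5 * ((2 * A + B) / 2)" by (simp add: field_simps)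
  finally show ?thesis unfolding e A_def B_def .
qed

lemma sig_diff_int: assumes "sig f - sig f' \<in> \<int>" shows "f = f'"
proof -
  have "sig f - sig f' = ((- real (f div 2) - 3 * real (f mod 2) / 2) - (- real (f' div 2) - 3 * real (f' mod 2) / 2))
     + ((real f - real f') / 2) * s5" unfolding sig_form by (simp add: field_simps)
  moreover have "((- real (f div 2) - 3 * real (f mod 2) / 2) - (- real (f' div 2) - 3 * real (f' mod 2) / 2)) \<in> \<rat>"
    by (auto intro!: Rats_diff Rats_divide Rats_mult Rats_of_nat simp: Rats_minus_iff)
  moreover have "(real f - real f') / 2 \<in> \<rat>" by (intro Rats_diff Rats_divide Rats_of_nat) auto
  ultimately have "(real f - real f') / 2 = 0" using s5_Rats_zero assms by metis
  then show ?thesis by simp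
qed

lemma gam_irrat: "gam \<notin> \<rat>"
proof
  assume "gam \<in> \<rat>"
  then have "1 + 1 * s5 \<in> \<rat>" unfolding gam_s5 by (metis Rats_1 Rats_add add.commute diff_add_cancel mult_1)
  then show False using sqrt5_lin[of 1 1] unfolding s5_def by simp
qed

lemma dense_orb:
  assumes "0 \<le> a" "a < b" "b \<le> 1"
  shows "\<exists>k. a < frac (orb k) \<and> frac (orb k) < b"
proof -
  define c where "c = (a + b) / 2"
  define \<alpha> where "\<alpha> = frac (c - 1/2)"
  have al: "0 \<le> \<alpha>" "\<alpha> \<le> 1" unfolding \<alpha>_def using frac_lt_1 less_imp_le by auto
  obtain k where k: "\<bar>frac (real k * gam) - \<alpha>\<bar> < (b - a) / 2"
    using Kronecker_approx_1_explicit[OF gam_irrat al, of "(b-a)/2"] assms by auto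
  define \<delta> where "\<delta> = frac (real k * gam) - \<alpha>"
  have o: "orb k = (c + \<delta>) + of_int (\<lfloor>real k * gam\<rfloor> - \<lfloor>c - 1/2\<rfloor>)"
    unfolding orb_def \<delta>_def \<alpha>_def frac_def by simp
  have hk: "\<delta> < (b-a)/2" "-\<delta> < (b-a)/2" using k unfolding \<delta>_def abs_less_iff by auto
  have h: "a - b < 2 * \<delta>" "2 * \<delta> < b - a" using hk by (simp_all add: field_simps)
  have c2: "2 * c = a + b" unfolding c_def by simp
  have r1: "0 \<le> c + \<delta>" using h assms c2 by linarith
  have r2: "c + \<delta> < 1" using h assms c2 by linarith
  have r3: "a < c + \<delta>" using h assms c2 by linarith
  have r4: "c + \<delta> < b" using h assms c2 by linarith
  note r = r1 r2 r3 r4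
  have fo: "frac (orb k) = c + \<delta>" unfolding o frac_add_of_int_right using r by (simp add: frac_eq)
  show ?thesis by (rule exI[of _ k]) (simp add: fo r3 r4)
qed

lemma nocut_floor:
  assumes "x \<le> y" "FF f x \<noteq> FF f y"
  shows "\<exists>c. x < c \<and> c \<le> y \<and> c + sig f \<in> \<int>"
proof -
  define N where "N = \<lfloor>y + sig f\<rfloor>"
  have "FF f x \<le> N" unfolding FF_def N_def using assms(1) by (intro floor_mono) simp
  then have "FF f x < N" using assms(2) unfolding N_def FF_def by simp
  then have "x + sig f < N" unfolding FF_def by (simp add: floor_less_iff)
  moreover have "N \<le> y + sig f" unfolding N_def by simp
  ultimately show ?thesis by (intro exI[of _ "N - sig f"]) auto
qed

lemma cut_floor_y:
  fixes x y s :: real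
  assumes "x < y" "y < x + 1" "y + s \<in> \<int>"
  shows "\<lfloor>y + s\<rfloor> = \<lfloor>x + s\<rfloor> + 1"
proof -
  obtain N where N: "y + s = of_int N" using assms(3) by (auto elim: Ints_cases)
  have a1: "real_of_int (N - 1) \<le> x + s" using assms N by simp
  have a2: "x + s < real_of_int (N - 1) + 1" using assms N by simp
  have "\<lfloor>x + s\<rfloor> = N - 1" using a1 a2 floor_eq_iff by blast
  then show ?thesis using N by simp
qed

lemma cut_floor_x:
  fixes x y s :: real
  assumes "x < y" "y < x + 1" "x + s \<in> \<int>"
  shows "\<lfloor>y + s\<rfloor> = \<lfloor>x + s\<rfloor>"
proof -
  obtain N where N: "x + s = of_int N" using assms(3) by (auto elim: Ints_cases)
  have a1: "real_of_int N \<le> y + s" using assms N by simp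
  have a2: "y + s < real_of_int N + 1" using assms N by simp
  have "\<lfloor>y + s\<rfloor> = N" using a1 a2 floor_eq_iff by blast
  then show ?thesis using N by simp
qed

lemma Obs_eq_floors:
  assumes "Obs e0 e1 x = Obs e0 e1 y" "e0 \<le> f" "f \<le> Suc e1"
  shows "FF f y - FF f x = FF e0 y - FF e0 x"
  using assms(2,3)
proof (induction f rule: dec_induct)
  case base then show ?case by simp
next
  case (step m)
  have all: "\<forall>e\<in>set [e0..<Suc e1]. ob e x = ob e y" using assms(1) unfolding Obs_def map_eq_conv .
  have "m \<le> e1" using step assms(3) by linarith
  then have "m \<in> set [e0..<Suc e1]" using step by auto
  then have "ob m x = ob m y" using all by blast
  then have "FF (Suc m) x - FF m x = FF (Suc m) y - FF m y"
    using ob_floor[of m x] ob_floor[of m y] by auto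
  then show ?case using step by simp
qed

theorem obs_count:
  assumes "e0 \<le> e1"
  shows "card (range (\<lambda>k. Obs e0 e1 (orb k))) = e1 - e0 + 2"
proof -
  let ?K = "cutK e0 e1"
  have K0: "?K \<inter> {0..<1} = (\<lambda>f. frac (- sig f)) ` {e0..Suc e1}"
  proof
    show "?K \<inter> {0..<1} \<subseteq> (\<lambda>f. frac (- sig f)) ` {e0..Suc e1}"
    proof
      fix c assume "c \<in> ?K \<inter> {0..<1}"
      then obtain f where f: "f \<in> {e0..Suc e1}" "c + sig f \<in> \<int>" "0 \<le> c" "c < 1"
        unfolding cutK_def by auto
      have "frac (- sig f) = c" unfolding frac_unique_iff using f
        by (metis Ints_minus add.commute diff_minus_eq_add minus_diff_eq)
      then show "c \<in> (\<lambda>f. frac (- sig f)) ` {e0..Suc e1}" using f by auto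
    qed
  next
    show "(\<lambda>f. frac (- sig f)) ` {e0..Suc e1} \<subseteq> ?K \<inter> {0..<1}"
    proof
      fix c assume "c \<in> (\<lambda>f. frac (- sig f)) ` {e0..Suc e1}"
      then obtain f where f: "f \<in> {e0..Suc e1}" "c = frac (- sig f)" by auto
      have "c + sig f = - of_int \<lfloor>- sig f\<rfloor>" unfolding f frac_def by simp
      then have "c + sig f \<in> \<int>" by simp
      then show "c \<in> ?K \<inter> {0..<1}" using f frac_lt_1 unfolding cutK_def by auto
    qed
  qed
  have inj: "inj_on (\<lambda>f. frac (- sig f)) {e0..Suc e1}"
  proof (rule inj_onI)
    fix f f' assume "frac (- sig f) = frac (- sig f')"
    then obtain n where "- sig f = - sig f' + of_int n" by (rule frac_eqE)
    then have "sig f' - sig f = of_int n" by linarith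
    then have "sig f' - sig f \<in> \<int>" by simp
    then show "f = f'" using sig_diff_int by metis
  qed
  have cardK: "card (?K \<inter> {0..<1}) = e1 - e0 + 2"
    unfolding K0 card_image[OF inj] using assms by simp
  have "card (range (\<lambda>k. Obs e0 e1 (orb k))) = card (?K \<inter> {0..<1})"
  proof (rule count_cells)
    show "Obs e0 e1 (x + of_int m) = Obs e0 e1 x" for x m
      unfolding Obs_def by (simp add: ob_shift_int)
    show "x + of_int m \<in> ?K" if xK0: "x \<in> ?K" for x m
    proof -
      obtain f where "f \<in> {e0..Suc e1}" "x + sig f \<in> \<int>" using xK0 unfolding cutK_def by auto
      moreover have "x + of_int m + sig f = (x + sig f) + of_int m" by simp
      ultimately show ?thesis unfolding cutK_def by (metis (mono_tags, lifting) Ints_add Ints_of_int mem_Collect_eq)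
    qed
    show "finite (?K \<inter> {0..<1})" unfolding K0 by simp
    show "?K \<inter> {0..<1} \<noteq> {}" unfolding K0 using assms by simp
    show "Obs e0 e1 x = Obs e0 e1 y"
      if xy: "x \<le> y" "y < x + 1" and nc: "\<And>c. c \<in> ?K \<Longrightarrow> x < c \<Longrightarrow> c \<le> y \<Longrightarrow> False" for x y
    proof -
      have fl: "FF f x = FF f y" if "f \<in> {e0..Suc e1}" for f
      proof (rule ccontr)
        assume "FF f x \<noteq> FF f y"
        then obtain c where "x < c" "c \<le> y" "c + sig f \<in> \<int>" using nocut_floor xy by blast
        moreover have "c \<in> ?K" using that \<open>c + sig f \<in> \<int>\<close> unfolding cutK_def by auto
        ultimately show False using nc[of c] by auto
      qed
      show ?thesis unfolding Obs_def
      proof (rule map_cong[OF refl])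
        fix e assume "e \<in> set [e0..<Suc e1]"
        then have "e \<in> {e0..Suc e1}" "Suc e \<in> {e0..Suc e1}" by auto
        then show "ob e x = ob e y" using fl by (simp add: ob_floor(2))
      qed
    qed
    show "Obs e0 e1 x \<noteq> Obs e0 e1 y"
      if xK: "x \<in> ?K" and yK: "y \<in> ?K" and xy: "x < y" "y < x + 1" for x y
    proof
      assume eq: "Obs e0 e1 x = Obs e0 e1 y"
      have d: "FF e0 y - FF e0 x = 0 \<or> FF e0 y - FF e0 x = 1"
      proof -
        have "FF e0 x \<le> FF e0 y" unfolding FF_def using xy by (intro floor_mono) simp
        moreover have "FF e0 y \<le> FF e0 x + 1" unfolding FF_def
        proof -
          have "\<lfloor>y + sig e0\<rfloor> \<le> \<lfloor>(x + sig e0) + 1\<rfloor>" using xy by (intro floor_mono) simp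
          then show "\<lfloor>y + sig e0\<rfloor> \<le> \<lfloor>x + sig e0\<rfloor> + 1" by simp
        qed
        ultimately show ?thesis by linarith
      qed
      then show False
      proof
        assume d0: "FF e0 y - FF e0 x = 0"
        obtain f where f: "f \<in> {e0..Suc e1}" "y + sig f \<in> \<int>" using yK unfolding cutK_def by blast
        have "FF f y - FF f x = 0" using Obs_eq_floors[OF eq] f d0 by auto
        moreover have "FF f y = FF f x + 1" unfolding FF_def using cut_floor_y[OF xy f(2)] .
        ultimately show False by simp
      next
        assume d1: "FF e0 y - FF e0 x = 1"
        obtain f where f: "f \<in> {e0..Suc e1}" "x + sig f \<in> \<int>" using xK unfolding cutK_def by blast
        have "FF f y - FF f x = 1" using Obs_eq_floors[OF eq] f d1 by auto
        moreover have "FF f y = FF f x" unfolding FF_def using cut_floor_x[OF xy f(2)] .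
        ultimately show False by simp
      qed
    qed
    show "\<exists>k. a < frac (orb k) \<and> frac (orb k) < b" if "0 \<le> a" "a < b" "b \<le> 1" for a b
      using dense_orb that .
  qed
  then show ?thesis using cardK by simp
qed


definition vcode :: "nat \<Rightarrow> real \<Rightarrow> nat" where
  "vcode j x = (if fA j x then 1 else if fB j x then 2 else 4)"
definition Wv :: "nat \<Rightarrow> real \<Rightarrow> nat list" where
  "Wv n x = map (\<lambda>j. vcode j x) [0..<n]"

lemma fA_fB: "fA j x \<Longrightarrow> \<not> fB j x" unfolding fA_def fB_def by auto

lemma vcode_eq_iff: "vcode j x = vcode j y \<longleftrightarrow> (fA j x = fA j y \<and> fB j x = fB j y)"
  unfolding vcode_def using fA_fB by auto

lemma ob_even: "ob (2 * j) x = fA j x" and ob_odd: "ob (2 * j + 1) x = fB j x"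
  unfolding ob_def by auto

lemma Wv_Obs:
  assumes "n \<ge> 1"
  shows "Wv n x = Wv n y \<longleftrightarrow> Obs 0 (2 * n - 1) x = Obs 0 (2 * n - 1) y"
proof -
  have l: "[0..<Suc (2 * n - 1)] = [0..<2 * n]" using assms by simp
  have "Wv n x = Wv n y \<longleftrightarrow> (\<forall>j<n. vcode j x = vcode j y)" unfolding Wv_def by (auto simp: map_eq_conv)
  also have "\<dots> \<longleftrightarrow> (\<forall>e<2*n. ob e x = ob e y)"
  proof
    assume h: "\<forall>j<n. vcode j x = vcode j y"
    show "\<forall>e<2*n. ob e x = ob e y"
    proof (intro allI impI)
      fix e assume "e < 2 * n"
      then have j: "e div 2 < n" by simp
      consider "e = 2 * (e div 2)" | "e = 2 * (e div 2) + 1"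
        by (metis odd_two_times_div_two_succ even_two_times_div_two)
      then show "ob e x = ob e y"
      proof cases
        case 1 then show ?thesis using h j ob_even vcode_eq_iff by metis
      next
        case 2 then show ?thesis using h j ob_odd vcode_eq_iff by metis
      qed
    qed
  next
    assume h: "\<forall>e<2*n. ob e x = ob e y"
    show "\<forall>j<n. vcode j x = vcode j y"
    proof (intro allI impI)
      fix j assume "j < n"
      then have "2 * j < 2 * n" "2 * j + 1 < 2 * n" by auto
      then show "vcode j x = vcode j y" using h ob_even ob_odd vcode_eq_iff by metis
    qed
  qed
  also have "\<dots> \<longleftrightarrow> Obs 0 (2 * n - 1) x = Obs 0 (2 * n - 1) y"
    unfolding Obs_def l by (auto simp: map_eq_conv)
  finally show ?thesis .
qed

lemma card_range_transfer:
  assumes "\<And>x y. G x = G y \<longleftrightarrow> H x = H y"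
  shows "card (range (\<lambda>k. G (f k))) = card (range (\<lambda>k. H (f k)))"
proof -
  let ?S = "range (\<lambda>k. (G (f k), H (f k)))"
  have a: "range (\<lambda>k. G (f k)) = fst ` ?S" by (auto simp: image_iff)
  have b: "range (\<lambda>k. H (f k)) = snd ` ?S" by (auto simp: image_iff)
  have ia: "inj_on fst ?S" by (rule inj_onI) (use assms in auto)
  have ib: "inj_on snd ?S" by (rule inj_onI) (use assms in auto)
  show ?thesis unfolding a b card_image[OF ia] card_image[OF ib] ..
qed

lemma Wv_count: "n \<ge> 1 \<Longrightarrow> card (range (\<lambda>k. Wv n (orb k))) = 2 * n + 1"
  using card_range_transfer[of "Wv n" "Obs 0 (2 * n - 1)" orb] Wv_Obs obs_count[of 0 "2 * n - 1"]
  by simp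

lemma complexity_range:
  "complexity (factors w) n = card (range (\<lambda>i. map w [i..<i+n]))"
proof -
  have "{u \<in> factors w. length u = n} = range (\<lambda>i. map w [i..<i+n])"
    unfolding factors_def by auto
  then show ?thesis unfolding complexity_def by simp
qed

lemma half_not_int: "(1/2::real) \<notin> \<int>"
proof
  assume "(1/2::real) \<in> \<int>"
  then obtain n where "(1/2::real) = of_int n" by (auto elim: Ints_cases)
  then have "(of_int (2 * n)::real) = 1" by simp
  then have "2 * n = 1" using of_int_eq_1_iff by blast
  then show False by presburger
qed

lemma uu_facts:
  shows "0 < frac (orb k)" "frac (orb k) \<noteq> bet" "frac (orb k) \<noteq> 2 * bet"
proof -
  have r: "(q::real) \<in> \<rat>" if "q \<in> {1/2 - real k, real k, -1 - real k, real k + 1/2, -5/2 - real k, real k + 1}" for q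
    using that by (auto intro!: Rats_diff Rats_add Rats_divide Rats_of_nat simp: Rats_minus_iff)
  show "0 < frac (orb k)"
  proof -
    have "orb k \<notin> \<int>"
    proof
      assume "orb k \<in> \<int>"
      moreover have "orb k = (1/2 - real k) + real k * s5" unfolding orb_def gam_s5 by (simp add: algebra_simps)
      ultimately have "real k = 0" using s5_Rats_zero[of "1/2 - real k" "real k"] r[of "1/2 - real k"] r[of "real k"] by simp
      then show False using \<open>orb k \<in> \<int>\<close> half_not_int unfolding orb_def by simp
    qed
    then show ?thesis by simp
  qed
  show "frac (orb k) \<noteq> bet"
  proof
    assume "frac (orb k) = bet"
    then have "orb k - bet \<in> \<int>" by (simp add: frac_unique_iff)
    moreover have "orb k - bet = (-1 - real k) + (real k + 1/2) * s5" unfolding orb_def gam_s5 bet_s5 by (simp add: field_simps)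
    ultimately have "real k + 1/2 = 0" using s5_Rats_zero[of "-1 - real k" "real k + 1/2"] r[of "-1 - real k"] r[of "real k + 1/2"] by simp
    then show False by (simp add: add_eq_0_iff) 
  qed
  show "frac (orb k) \<noteq> 2 * bet"
  proof
    assume "frac (orb k) = 2 * bet"
    then have "orb k - 2 * bet \<in> \<int>" by (simp add: frac_unique_iff)
    moreover have "orb k - 2 * bet = (-5/2 - real k) + (real k + 1) * s5" unfolding orb_def gam_s5 bet_s5 by (simp add: field_simps)
    ultimately have "real k + 1 = 0" using s5_Rats_zero[of "-5/2 - real k" "real k + 1"] r[of "-5/2 - real k"] r[of "real k + 1"] by simp
    then show False by simp
  qed
qed

lemma bet_sq: "bet * bet = 3 * bet - 1"
  unfolding bet_s5 using s5_sq by (simp add: field_simps)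

lemma phi_bet: "4 - 2 * phi = 2 * bet" "2 * phi - 3 = 1 - 2 * bet" "2 - phi = bet" "3 - 2 * phi = 2 * bet - 1"
  "y / phi = y * (1 - bet)"
proof -
  show "4 - 2 * phi = 2 * bet" "2 * phi - 3 = 1 - 2 * bet" "2 - phi = bet" "3 - 2 * phi = 2 * bet - 1"
    unfolding phi_s5 bet_s5 by (simp_all add: field_simps)
  have "1 / phi = 1 - bet" using gam_s5 bet_s5 unfolding gam_def by (simp add: field_simps)
  then show "y / phi = y * (1 - bet)" by (metis divide_inverse inverse_eq_divide)
qed

lemma piece_u:
  assumes u: "0 < u" "u < 1"
  shows "(u, 1 - u) \<in> piece i \<longleftrightarrow> (i = 1 \<and> u < bet) \<or> (i = 2 \<and> bet < u \<and> u < 2 * bet) \<or> (i = 4 \<and> 2 * bet < u)"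
proof -
  have e1: "u * (2 - bet) - (1 - bet) = (u - bet) * (2 - bet)" using bet_sq by (simp add: algebra_simps)
  have e2: "u * (2 - bet) - 2 * (1 - bet) = (u - 2 * bet) * (2 - bet)" using bet_sq by (simp add: algebra_simps)
  have bb: "0 < bet" "2 * bet < 1" using bet_pos bet_small by auto
  have s1: "u * (2 - bet) - (1 - bet) > 0 \<longleftrightarrow> u > bet" unfolding e1 using bb by (simp add: zero_less_mult_iff)
  have s3: "u * (2 - bet) - 2 * (1 - bet) > 0 \<longleftrightarrow> u > 2 * bet" unfolding e2 using bb by (simp add: zero_less_mult_iff)
  have x1a: "u * (1 - bet) = u - u * bet" by (simp add: algebra_simps)
  have x1b: "u * (2 - bet) = 2 * u - u * bet" by (simp add: algebra_simps)
  note x1 = x1a x1b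
  have q1: "1 - u < bet + u * (1 - bet) \<longleftrightarrow> bet < u" unfolding s1[symmetric] x1 by argo
  have s2: "u * (2 - bet) - (1 - bet) < 0 \<longleftrightarrow> u < bet" unfolding e1 using bb by (simp add: mult_less_0_iff)
  have s4: "u * (2 - bet) - 2 * (1 - bet) < 0 \<longleftrightarrow> u < 2 * bet" unfolding e2 using bb by (simp add: mult_less_0_iff)
  have q2: "bet + u * (1 - bet) < 1 - u \<longleftrightarrow> u < bet" unfolding s2[symmetric] x1 by argo
  have q3: "1 - u < (2 * bet - 1) + u * (1 - bet) \<longleftrightarrow> 2 * bet < u" unfolding s3[symmetric] x1 by argo
  have q4: "(2 * bet - 1) + u * (1 - bet) < 1 - u \<longleftrightarrow> u < 2 * bet" unfolding s4[symmetric] x1 by argo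
  have q5: "1 - u < 1 - 2 * bet \<longleftrightarrow> 2 * bet < u" by argo
  have q6: "1 - 2 * bet < 1 - u \<longleftrightarrow> u < 2 * bet" by argo
  show ?thesis unfolding piece_def phi_bet(1-4) phi_bet(5)
    apply (simp only: mem_Collect_eq prod.case q1 q2 q3 q4 q5 q6)
    using u bb \<open>0 < bet\<close>
    apply (simp only: le_less diff_gt_0_iff_gt simp_thms)
    apply (cases "u < bet"; cases "2 * bet < u")
    apply (simp_all add: not_less conj_commute)
    done
qed


lemma orb_not_int: "orb k \<notin> \<int>"
  using uu_facts(1)[of k] by simp

lemma face_point_m0: "face_point m0 k = (frac (orb k), 1 - frac (orb k))"
proof -
  have a: "1/2 + 2 * real k / phi = orb k" unfolding orb_def gam_def by simp
  have b: "1/2 - 2 * real k / phi = - orb k + 1" unfolding orb_def gam_def by simp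
  have "frac (- orb k + 1) = frac (- orb k)" using frac_1_eq by blast
  also have "\<dots> = 1 - frac (orb k)" using orb_not_int by (simp add: frac_neg)
  finally have c: "frac (- orb k + 1) = 1 - frac (orb k)" .
  have fp: "face_point m0 k = (frac (1/2 + 2 * real k / phi), frac (1/2 - 2 * real k / phi))"
    by (simp only: face_point_def m0_def fst_conv snd_conv)
  show ?thesis unfolding fp a b c ..
qed

lemma v_word_code: "v_word m0 k = vcode k (1/2)"
proof -
  define u where "u = frac (orb k)"
  have u: "0 < u" "u < 1" "u \<noteq> bet" "u \<noteq> 2 * bet" unfolding u_def using uu_facts frac_lt_1 by auto
  have fA: "fA k (1/2) \<longleftrightarrow> u < bet" unfolding fA_def u_def orb_def ..
  have fB: "fB k (1/2) \<longleftrightarrow> bet \<le> u \<and> u < 2 * bet" unfolding fB_def u_def orb_def ..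
  have fp: "face_point m0 k = (u, 1 - u)" unfolding u_def by (rule face_point_m0)
  show ?thesis unfolding v_word_def fp
  proof (rule the_equality)
    show "vcode k (1/2) \<in> {1..7} \<and> (u, 1 - u) \<in> piece (vcode k (1/2))"
      unfolding vcode_def fA fB piece_u[OF u(1,2)] using u by auto
    fix i assume "i \<in> {1..7} \<and> (u, 1 - u) \<in> piece i"
    then show "i = vcode k (1/2)" unfolding vcode_def fA fB piece_u[OF u(1,2)] using u by auto
  qed
qed

lemma vcode_shift: "vcode (i + j) x = vcode j (x + real i * gam)"
proof -
  have e: "x + real (i + j) * gam = (x + real i * gam) + real j * gam" by (simp add: algebra_simps)
  show ?thesis unfolding vcode_def fA_def fB_def by (simp only: e)
qed

lemma v_factor: "map (v_word m0) [i..<i+n] = Wv n (orb i)"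
proof (rule nth_equalityI)
  show "length (map (v_word m0) [i..<i+n]) = length (Wv n (orb i))" unfolding Wv_def by simp
  fix j assume "j < length (map (v_word m0) [i..<i+n])"
  then have j: "j < n" by simp
  have "map (v_word m0) [i..<i+n] ! j = vcode (i + j) (1/2)" using j by (simp add: v_word_code)
  also have "\<dots> = vcode j (orb i)" unfolding vcode_shift orb_def ..
  finally show "map (v_word m0) [i..<i+n] ! j = Wv n (orb i) ! j" unfolding Wv_def using j by simp
qed

theorem v_complexity: "complexity (factors (v_word m0)) n = 2 * n + 1"
proof (cases "n = 0")
  case True
  have "range (\<lambda>i. map (v_word m0) [i..<i+n]) = {[]}" using True by auto
  then show ?thesis unfolding complexity_range using True by simp
next
  case False
  then show ?thesis unfolding complexity_range v_factor using Wv_count by simp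
qed


definition psi :: real where "psi = gam / 2"

lemma psi_bet: "psi + bet = 1" unfolding psi_def using gam_bet by simp
lemma psi_pos: "0 < psi" and psi_gt: "1/2 < psi" unfolding psi_def using gam_gt1 by auto
lemma inv_phi: "1 / phi = psi" unfolding psi_def gam_def by simp
lemma inv_phi2: "1 / phi^2 = bet" unfolding bet_def ..

lemma pt3_m0: "pt3 m0 theta0 t = (t / 2, 1/2 + t * psi, 1/2 + t * bet)"
  unfolding pt3_def m0_def theta0_def by (simp add: inv_phi inv_phi2)

lemma CT_iff: "t \<in> crossing_times m0 theta0 \<longleftrightarrow> 0 \<le> t \<and> (t / 2 \<in> \<int> \<or> 1/2 + t * psi \<in> \<int> \<or> 1/2 + t * bet \<in> \<int>)"
  unfolding crossing_times_def pt3_m0 by simp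

lemma letter_eq: "crossing_letter m0 theta0 t = (if t / 2 \<in> \<int> then LA else if 1/2 + t * psi \<in> \<int> then LB else LC)"
  unfolding crossing_letter_def pt3_m0 by simp

lemma int_shift: "(n::real) \<in> \<int> \<Longrightarrow> (n + b \<in> \<int>) = (b \<in> \<int>)"
  by (metis Ints_add Ints_diff add_diff_cancel_left')

lemma int_unit_interval: "(a::real) \<in> \<int> \<Longrightarrow> 0 \<le> a \<Longrightarrow> a < 1 \<Longrightarrow> a = 0"
proof -
  assume "a \<in> \<int>" "0 \<le> a" "a < 1"
  then obtain m where m: "a = of_int m" by (auto elim: Ints_cases)
  then have "0 \<le> m" "m < 1" using \<open>0 \<le> a\<close> \<open>a < 1\<close> by simp_all
  then have "m = 0" by simp
  then show "a = 0" using m by simp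
qed

lemma int_open_interval: "(a::real) \<in> \<int> \<Longrightarrow> -1 < a \<Longrightarrow> a < 1 \<Longrightarrow> a = 0"
proof -
  assume "a \<in> \<int>" "-1 < a" "a < 1"
  then obtain m where m: "a = of_int m" by (auto elim: Ints_cases)
  then have "-1 < m" "m < 1" using \<open>-1 < a\<close> \<open>a < 1\<close> by simp_all
  then have "m = 0" by simp
  then show "a = 0" using m by simp
qed

lemma int_0_3: "(a::real) \<in> \<int> \<Longrightarrow> 0 < a \<Longrightarrow> a < 3 \<Longrightarrow> a = 1 \<or> a = 2"
proof -
  assume "a \<in> \<int>" "0 < a" "a < 3"
  then obtain m where m: "a = of_int m" by (auto elim: Ints_cases)
  then have "0 < m" "m < 3" using \<open>0 < a\<close> \<open>a < 3\<close> by simp_all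
  then have "m = 1 \<or> m = 2" by auto
  then show "a = 1 \<or> a = 2" using m by auto
qed

definition s1 :: "real \<Rightarrow> real" where
  "s1 u = (if u < bet then u / bet else (1 - u) / psi)"
definition s2 :: "real \<Rightarrow> real" where
  "s2 u = (if u < bet then (1 - u) / psi else if u < 2 * bet then u / bet else (2 - u) / psi)"

locale ufix =
  fixes u :: real
  assumes u0: "0 < u" and u1: "u < 1" and ub: "u \<noteq> bet" and ub2: "u \<noteq> 2 * bet"
begin

lemma cond_a: "0 \<le> (s::real) \<Longrightarrow> s < 2 \<Longrightarrow> s / 2 \<in> \<int> \<longleftrightarrow> s = 0"
  using int_unit_interval[of "s/2"] by auto

lemma cond_b:
  assumes "0 \<le> s" "s < 2"
  shows "u + s * psi \<in> \<int> \<longleftrightarrow> s = (1 - u) / psi \<or> (s = (2 - u) / psi \<and> 2 * bet < u)"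
proof
  assume h: "u + s * psi \<in> \<int>"
  have p: "0 < psi" "psi + bet = 1" "0 < bet" "2 * bet < 1" using psi_pos psi_bet bet_pos bet_small by auto
  have "0 \<le> s * psi" using assms p by simp
  moreover have "s * psi < 2 * psi" using assms p by simp
  ultimately have "0 < u + s * psi" "u + s * psi < 3" using u0 u1 p by linarith+
  then consider "u + s * psi = 1" | "u + s * psi = 2" using int_0_3 h by blast
  then show "s = (1 - u) / psi \<or> (s = (2 - u) / psi \<and> 2 * bet < u)"
  proof cases
    case 1 then have "s = (1 - u) / psi" using p by (simp add: field_simps)
    then show ?thesis by simp
  next
    case 2 then have e: "s = (2 - u) / psi" using p by (simp add: field_simps)
    have "s * psi < 2 * psi" using assms p by simp
    then have "2 * bet < u" using 2 p by linarith
    then show ?thesis using e by simp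
  qed
next
  have p: "0 < psi" using psi_pos by simp
  assume "s = (1 - u) / psi \<or> (s = (2 - u) / psi \<and> 2 * bet < u)"
  then consider "s = (1 - u) / psi" | "s = (2 - u) / psi" by blast
  then show "u + s * psi \<in> \<int>"
  proof cases
    case 1 then have "u + s * psi = 1" using p by simp
    then show ?thesis by simp
  next
    case 2 then have "u + s * psi = 2" using p by simp
    then show ?thesis by simp
  qed
qed

lemma cond_c:
  assumes "0 \<le> s" "s < 2"
  shows "s * bet - u \<in> \<int> \<longleftrightarrow> s = u / bet \<and> u < 2 * bet"
proof
  have p: "0 < bet" "2 * bet < 1" using bet_pos bet_small by auto
  assume h: "s * bet - u \<in> \<int>"
  have "0 \<le> s * bet" using assms p by simp
  moreover have "s * bet < 2 * bet" using assms p by simp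
  ultimately have "-1 < s * bet - u" "s * bet - u < 1" using u0 u1 p by linarith+
  then have z: "s * bet - u = 0" using int_open_interval h by blast
  then have "s = u / bet" using p by (simp add: field_simps)
  moreover have "u < 2 * bet" using z \<open>s * bet < 2 * bet\<close> by linarith
  ultimately show "s = u / bet \<and> u < 2 * bet" by simp
next
  have p: "0 < bet" using bet_pos by simp
  assume "s = u / bet \<and> u < 2 * bet"
  then have "s * bet - u = 0" using p by simp
  then show "s * bet - u \<in> \<int>" by simp
qed

lemma order_s: "0 < s1 u" "s1 u < s2 u" "s2 u < 2"
proof -
  have p: "0 < psi" "psi + bet = 1" "0 < bet" "2 * bet < 1" "1/2 < psi" using psi_pos psi_bet bet_pos bet_small psi_gt by auto
  have A: "u / bet < (1 - u) / psi \<longleftrightarrow> u < bet"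
  proof -
    have "u / bet < (1 - u) / psi \<longleftrightarrow> u * psi < (1 - u) * bet" using p by (simp add: field_simps)
    also have "\<dots> \<longleftrightarrow> u < bet"
    proof -
      have "u * psi + u * bet = u" using p(2) by (metis distrib_left mult.right_neutral)
      moreover have "(1 - u) * bet = bet - u * bet" by (simp add: algebra_simps)
      ultimately show ?thesis by argo
    qed
    finally show ?thesis .
  qed
  have A2: "(1 - u) / psi < u / bet \<longleftrightarrow> bet < u"
  proof -
    have "(1 - u) / psi < u / bet \<longleftrightarrow> (1 - u) * bet < u * psi" using p by (simp add: field_simps)
    also have "\<dots> \<longleftrightarrow> bet < u"
    proof -
      have "u * psi + u * bet = u" using p(2) by (metis distrib_left mult.right_neutral)
      moreover have "(1 - u) * bet = bet - u * bet" by (simp add: algebra_simps)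
      ultimately show ?thesis by argo
    qed
    finally show ?thesis .
  qed
  have B: "(1 - u) / psi < 2" using p u0 by (simp add: field_simps)
  have C: "u / bet < 2 \<longleftrightarrow> u < 2 * bet" using p by (simp add: field_simps)
  have D: "(2 - u) / psi < 2 \<longleftrightarrow> 2 * bet < u" using p by (simp add: field_simps) argo
  have E: "(1 - u) / psi < (2 - u) / psi" using p by (simp add: field_simps)
  have F: "0 < u / bet" "0 < (1 - u) / psi" using p u0 u1 by auto
  show "0 < s1 u" unfolding s1_def using F by auto
  show "s1 u < s2 u" unfolding s1_def s2_def using A A2 E ub ub2 by auto
  show "s2 u < 2" unfolding s2_def using B C D ub ub2 by auto
qed

lemma slice:
  assumes s: "0 \<le> s" "s < 2"
  shows "(s / 2 \<in> \<int> \<or> u + s * psi \<in> \<int> \<or> s * bet - u \<in> \<int>) \<longleftrightarrow> (s = 0 \<or> s = s1 u \<or> s = s2 u)"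
proof -
  have e: "(s / 2 \<in> \<int> \<or> u + s * psi \<in> \<int> \<or> s * bet - u \<in> \<int>) \<longleftrightarrow>
     (s = 0 \<or> (s = (1 - u) / psi \<or> (s = (2 - u) / psi \<and> 2 * bet < u)) \<or> (s = u / bet \<and> u < 2 * bet))"
    using cond_a[OF s] cond_b[OF s] cond_c[OF s] by simp
  have bp: "0 < bet" using bet_pos .
  consider "u < bet" | "bet < u" "u < 2 * bet" | "2 * bet < u" using ub ub2 by linarith
  then show ?thesis
  proof cases
    case 1
    then have "s1 u = u / bet" "s2 u = (1 - u) / psi" "\<not> 2 * bet < u" "u < 2 * bet" unfolding s1_def s2_def using bp by auto
    then show ?thesis unfolding e by auto
  next
    case 2
    then have "s1 u = (1 - u) / psi" "s2 u = u / bet" "\<not> 2 * bet < u" "u < 2 * bet" unfolding s1_def s2_def using bp by auto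
    then show ?thesis unfolding e by auto
  next
    case 3
    then have "s1 u = (1 - u) / psi" "s2 u = (2 - u) / psi" "2 * bet < u" "\<not> u < 2 * bet" unfolding s1_def s2_def using bp by auto
    then show ?thesis unfolding e by auto
  qed
qed

lemma letter_s1: "u + s1 u * psi \<in> \<int> \<longleftrightarrow> \<not> u < bet"
proof -
  have p: "0 < psi" "psi + bet = 1" "0 < bet" using psi_pos psi_bet bet_pos by auto
  show ?thesis
  proof (cases "u < bet")
    case True
    have "u * bet + u * psi = u" using p(2) by (metis distrib_left mult.right_neutral add.commute)
    then have "u + u / bet * psi = u / bet" using p by (simp add: field_simps)
    moreover have "0 \<le> u / bet" "u / bet < 1" using True p u0 by auto
    moreover have "u / bet \<noteq> 0" using u0 p by simp
    ultimately have "u / bet \<notin> \<int>" using int_unit_interval by blast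
    then show ?thesis unfolding s1_def using True \<open>u + u / bet * psi = u / bet\<close> by simp
  next
    case False
    then show ?thesis unfolding s1_def using p by simp
  qed
qed

lemma letter_s2: "u + s2 u * psi \<in> \<int> \<longleftrightarrow> \<not> (bet \<le> u \<and> u < 2 * bet)"
proof -
  have p: "0 < psi" "psi + bet = 1" "0 < bet" using psi_pos psi_bet bet_pos by auto
  consider "u < bet" | "bet < u" "u < 2 * bet" | "2 * bet < u" using ub ub2 by linarith
  then show ?thesis
  proof cases
    case 1 then show ?thesis unfolding s2_def using p by simp
  next
    case 2
    have "u * bet + u * psi = u" using p(2) by (metis distrib_left mult.right_neutral add.commute)
    then have "u + u / bet * psi = u / bet" using p by (simp add: field_simps)
    moreover have b12: "1 < u / bet" "u / bet < 2" using 2 p by (simp_all add: field_simps)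
    moreover have "u / bet \<notin> \<int>"
    proof
      assume "u / bet \<in> \<int>"
      then have "u / bet - 1 \<in> \<int>" by simp
      moreover have "0 \<le> u / bet - 1" "u / bet - 1 < 1" using b12 by auto
      ultimately have "u / bet - 1 = 0" using int_unit_interval by blast
      then show False using \<open>1 < u / bet\<close> by simp
    qed
    moreover have "s2 u = u / bet" unfolding s2_def using 2 by simp
    ultimately show ?thesis using 2 by simp
  next
    case 3 then show ?thesis unfolding s2_def using p by simp
  qed
qed

end


definition uu :: "nat \<Rightarrow> real" where "uu k = frac (orb k)"

lemma ufix_uu: "ufix (uu k)"
  unfolding uu_def using uu_facts[of k] frac_lt_1 by unfold_locales auto

definition tau :: "nat \<Rightarrow> real" where
  "tau p = 2 * real (p div 3) + (if p mod 3 = 0 then 0 else if p mod 3 = 1 then s1 (uu (p div 3)) else s2 (uu (p div 3)))"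

definition ed :: "nat \<Rightarrow> nat" where "ed p = 2 * (p div 3) + p mod 3 - 1"
definition bl :: "nat \<Rightarrow> real \<Rightarrow> abc" where
  "bl p x = (if p mod 3 = 0 then LA else if ob (ed p) x then LC else LB)"

lemma dA: "(2 * real k + s) / 2 \<in> \<int> \<longleftrightarrow> s / 2 \<in> \<int>"
proof -
  have e: "(2 * real k + s) / 2 = real k + s / 2" by simp
  show ?thesis unfolding e by (rule int_shift) simp
qed

lemma orb_split: "orb k = of_int \<lfloor>orb k\<rfloor> + uu k" unfolding uu_def frac_def by simp

lemma dB: "1/2 + (2 * real k + s) * psi \<in> \<int> \<longleftrightarrow> uu k + s * psi \<in> \<int>"
proof -
  have "1/2 + (2 * real k + s) * psi = orb k + s * psi" unfolding orb_def psi_def by (simp add: algebra_simps)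
  also have "\<dots> = of_int \<lfloor>orb k\<rfloor> + (uu k + s * psi)" using orb_split[of k] by simp
  finally show ?thesis using int_shift[of "of_int \<lfloor>orb k\<rfloor>" "uu k + s * psi"] by simp
qed

lemma dC: "1/2 + (2 * real k + s) * bet \<in> \<int> \<longleftrightarrow> s * bet - uu k \<in> \<int>"
proof -
  have g: "gam = 2 - 2 * bet" using gam_bet by simp
  have "1/2 + (2 * real k + s) * bet = (2 * real k + 1 - orb k) + s * bet" unfolding orb_def g by (simp add: algebra_simps)
  also have "\<dots> = of_int (2 * int k + 1 - \<lfloor>orb k\<rfloor>) + (s * bet - uu k)" using orb_split[of k] by simp
  finally show ?thesis using int_shift[of "of_int (2 * int k + 1 - \<lfloor>orb k\<rfloor>)" "s * bet - uu k"] by simp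
qed

lemma CT_slice:
  assumes "0 \<le> s" "s < 2"
  shows "2 * real k + s \<in> crossing_times m0 theta0 \<longleftrightarrow> s = 0 \<or> s = s1 (uu k) \<or> s = s2 (uu k)"
proof -
  interpret ufix "uu k" by (rule ufix_uu)
  have "2 * real k + s \<in> crossing_times m0 theta0 \<longleftrightarrow> (s / 2 \<in> \<int> \<or> uu k + s * psi \<in> \<int> \<or> s * bet - uu k \<in> \<int>)"
    unfolding CT_iff dA dB dC using assms by simp
  then show ?thesis using slice[OF assms] by simp
qed

lemma tau_k: "tau p = 2 * real (p div 3) + (if p mod 3 = 0 then 0 else if p mod 3 = 1 then s1 (uu (p div 3)) else s2 (uu (p div 3)))"
  unfolding tau_def ..

lemma tau_split: "tau (3 * k + r) = 2 * real k + (if r = 0 then 0 else if r = 1 then s1 (uu k) else s2 (uu k))" if "r < 3"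
proof -
  have d: "(3 * k + r) div 3 = k" and m: "(3 * k + r) mod 3 = r" using that by auto
  show ?thesis unfolding tau_def d m ..
qed

lemma tau_range:
  "0 \<le> tau p - 2 * real (p div 3)" "tau p - 2 * real (p div 3) < 2"
  "tau p - 2 * real (p div 3) = 0 \<longleftrightarrow> p mod 3 = 0"
proof -
  interpret ufix "uu (p div 3)" by (rule ufix_uu)
  show "0 \<le> tau p - 2 * real (p div 3)" "tau p - 2 * real (p div 3) < 2"
    "tau p - 2 * real (p div 3) = 0 \<longleftrightarrow> p mod 3 = 0"
    unfolding tau_def using order_s by auto
qed

lemma tau_CT: "tau p \<in> crossing_times m0 theta0"
proof -
  define s where "s = tau p - 2 * real (p div 3)"
  have s: "0 \<le> s" "s < 2" unfolding s_def using tau_range by auto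
  have "s = 0 \<or> s = s1 (uu (p div 3)) \<or> s = s2 (uu (p div 3))" unfolding s_def tau_def by auto
  then have "2 * real (p div 3) + s \<in> crossing_times m0 theta0" using CT_slice[OF s] by blast
  then show ?thesis unfolding s_def by simp
qed

lemma tau_Suc: "tau p < tau (Suc p)"
proof -
  define k where "k = p div 3"
  interpret ufix "uu k" by (rule ufix_uu)
  have "p mod 3 = 0 \<or> p mod 3 = 1 \<or> p mod 3 = 2" by auto
  then consider "p mod 3 = 0" | "p mod 3 = 1" | "p mod 3 = 2" by (elim disjE) auto
  then show ?thesis
  proof cases
    case 1
    have "Suc p div 3 = k" "Suc p mod 3 = 1" using 1 unfolding k_def by presburger+
    then have "tau p = 2 * real k" "tau (Suc p) = 2 * real k + s1 (uu k)" unfolding tau_k using 1 k_def by simp_all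
    then show ?thesis using order_s by simp
  next
    case 2
    have "Suc p div 3 = k" "Suc p mod 3 = 2" using 2 unfolding k_def by presburger+
    then have "tau p = 2 * real k + s1 (uu k)" "tau (Suc p) = 2 * real k + s2 (uu k)" unfolding tau_k using 2 k_def by simp_all
    then show ?thesis using order_s by simp
  next
    case 3
    have "Suc p div 3 = k + 1" "Suc p mod 3 = 0" using 3 unfolding k_def by presburger+
    then have "tau p = 2 * real k + s2 (uu k)" "tau (Suc p) = 2 * real k + 2" unfolding tau_k using 3 k_def by simp_all
    then show ?thesis using order_s by simp
  qed
qed

lemma tau_mono: "strict_mono tau"
  using tau_Suc strict_mono_Suc_iff by blast

lemma CT_tau: assumes "t \<in> crossing_times m0 theta0" shows "\<exists>p. t = tau p"
proof -
  have t0: "0 \<le> t" using assms CT_iff by blast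
  define k where "k = nat \<lfloor>t / 2\<rfloor>"
  have kk: "real k = of_int \<lfloor>t / 2\<rfloor>" unfolding k_def using t0 by simp
  define s where "s = t - 2 * real k"
  have s: "0 \<le> s" "s < 2" unfolding s_def kk
    using floor_le_iff[of "t/2"] less_floor_iff[of _ "t/2"] real_of_int_floor_add_one_gt[of "t/2"] of_int_floor_le[of "t/2"]
    by linarith+
  have "2 * real k + s \<in> crossing_times m0 theta0" using assms unfolding s_def by simp
  then consider "s = 0" | "s = s1 (uu k)" | "s = s2 (uu k)" using CT_slice[OF s] by blast
  then show ?thesis
  proof cases
    case 1 then show ?thesis using tau_split[of 0 k] unfolding s_def by (intro exI[of _ "3 * k"]) auto
  next
    case 2 then show ?thesis using tau_split[of 1 k] unfolding s_def by (intro exI[of _ "3 * k + 1"]) auto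
  next
    case 3 then show ?thesis using tau_split[of 2 k] unfolding s_def by (intro exI[of _ "3 * k + 2"]) auto
  qed
qed

lemma letter_tau: "crossing_letter m0 theta0 (tau p) = bl p (1/2)"
proof -
  define k where "k = p div 3"
  interpret ufix "uu k" by (rule ufix_uu)
  have fA: "fA k (1/2) \<longleftrightarrow> uu k < bet" unfolding fA_def uu_def orb_def ..
  have fB: "fB k (1/2) \<longleftrightarrow> bet \<le> uu k \<and> uu k < 2 * bet" unfolding fB_def uu_def orb_def ..
  have "p mod 3 = 0 \<or> p mod 3 = 1 \<or> p mod 3 = 2" by auto
  then consider "p mod 3 = 0" | "p mod 3 = 1" | "p mod 3 = 2" by (elim disjE) auto
  then show ?thesis
  proof cases
    case 1
    have t: "tau p = 2 * real k" unfolding tau_k using 1 k_def by simp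
    have "tau p / 2 \<in> \<int>" unfolding t by simp
    then show ?thesis unfolding letter_eq bl_def using 1 by simp
  next
    case 2
    have t: "tau p = 2 * real k + s1 (uu k)" unfolding tau_k using 2 k_def by simp
    have s: "0 \<le> s1 (uu k)" "s1 (uu k) < 2" "s1 (uu k) \<noteq> 0" using order_s by auto
    have nA: "tau p / 2 \<notin> \<int>" unfolding t dA using cond_a[OF s(1,2)] s(3) by simp
    have yB: "1/2 + tau p * psi \<in> \<int> \<longleftrightarrow> \<not> uu k < bet" unfolding t dB using letter_s1 .
    have ed: "ed p = 2 * k" unfolding ed_def k_def using 2 by simp
    have ob: "ob (ed p) (1/2) = fA k (1/2)" unfolding ed ob_def by simp
    show ?thesis unfolding letter_eq bl_def using nA yB 2 ob fA by simp
  next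
    case 3
    have t: "tau p = 2 * real k + s2 (uu k)" unfolding tau_k using 3 k_def by simp
    have s: "0 \<le> s2 (uu k)" "s2 (uu k) < 2" "s2 (uu k) \<noteq> 0" using order_s by auto
    have nA: "tau p / 2 \<notin> \<int>" unfolding t dA using cond_a[OF s(1,2)] s(3) by simp
    have yB: "1/2 + tau p * psi \<in> \<int> \<longleftrightarrow> \<not> (bet \<le> uu k \<and> uu k < 2 * bet)" unfolding t dB using letter_s2 .
    have ed: "ed p = 2 * k + 1" unfolding ed_def k_def using 3 by simp
    have ob: "ob (ed p) (1/2) = fB k (1/2)" unfolding ed ob_def by simp
    show ?thesis unfolding letter_eq bl_def using nA yB 3 ob fB by simp
  qed
qed

lemma billiard_bl: "billiard_word m0 theta0 p = bl p (1/2)"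
proof -
  let ?CT = "crossing_times m0 theta0"
  have below: "{s \<in> ?CT. s < tau q} = tau ` {..<q}" for q
  proof
    show "{s \<in> ?CT. s < tau q} \<subseteq> tau ` {..<q}"
    proof
      fix s assume "s \<in> {s \<in> ?CT. s < tau q}"
      then obtain q' where "s = tau q'" "tau q' < tau q" using CT_tau by blast
      then show "s \<in> tau ` {..<q}" using tau_mono strict_mono_less by blast
    qed
    show "tau ` {..<q} \<subseteq> {s \<in> ?CT. s < tau q}"
      using tau_CT tau_mono strict_mono_less by blast
  qed
  have cardb: "card {s \<in> ?CT. s < tau q} = q" for q
    unfolding below using strict_mono_imp_inj_on[OF tau_mono] card_image
    by (metis card_lessThan inj_on_subset subset_UNIV)
  have th: "(THE t. t \<in> ?CT \<and> card {s \<in> ?CT. s < t} = p) = tau p"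
  proof (rule the_equality)
    show "tau p \<in> ?CT \<and> card {s \<in> ?CT. s < tau p} = p" using tau_CT cardb by simp
    fix t assume "t \<in> ?CT \<and> card {s \<in> ?CT. s < t} = p"
    then obtain q where "t = tau q" "card {s \<in> ?CT. s < tau q} = p" using CT_tau by blast
    then show "t = tau p" using cardb by simp
  qed
  show ?thesis unfolding billiard_word_def th by (rule letter_tau)
qed


definition G :: "nat \<Rightarrow> nat \<Rightarrow> real \<Rightarrow> abc list" where
  "G r n x = map (\<lambda>i. bl (r + i) x) [0..<n]"

lemma fA_shift: "fA (k + j) x = fA j (x + real k * gam)"
proof -
  have e: "x + real (k + j) * gam = (x + real k * gam) + real j * gam" by (simp add: algebra_simps)
  show ?thesis unfolding fA_def by (simp only: e)
qed

lemma fB_shift: "fB (k + j) x = fB j (x + real k * gam)"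
proof -
  have e: "x + real (k + j) * gam = (x + real k * gam) + real j * gam" by (simp add: algebra_simps)
  show ?thesis unfolding fB_def by (simp only: e)
qed

lemma ob_shift: "ob (2 * k + e) x = ob e (x + real k * gam)"
proof -
  have d: "(2 * k + e) div 2 = k + e div 2" by simp
  show ?thesis unfolding ob_def d using fA_shift fB_shift by simp
qed

lemma bl_shift: "bl (3 * k + q) x = bl q (x + real k * gam)"
proof (cases "q mod 3 = 0")
  case True
  then show ?thesis unfolding bl_def by simp
next
  case False
  have m: "(3 * k + q) mod 3 = q mod 3" by simp
  have e: "ed (3 * k + q) = 2 * k + ed q" unfolding ed_def using False by simp
  show ?thesis unfolding bl_def m e ob_shift using False by simp
qed

lemma billiard_factor: "map (billiard_word m0 theta0) [p..<p+n] = G (p mod 3) n (orb (p div 3))"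
proof (rule nth_equalityI)
  show "length (map (billiard_word m0 theta0) [p..<p+n]) = length (G (p mod 3) n (orb (p div 3)))"
    unfolding G_def by simp
  fix i assume "i < length (map (billiard_word m0 theta0) [p..<p+n])"
  then have i: "i < n" by simp
  have pe: "p + i = 3 * (p div 3) + (p mod 3 + i)" by simp
  have "map (billiard_word m0 theta0) [p..<p+n] ! i = bl (p + i) (1/2)" using i by (simp add: billiard_bl)
  also have "\<dots> = bl (p mod 3 + i) (orb (p div 3))" unfolding pe bl_shift orb_def ..
  finally show "map (billiard_word m0 theta0) [p..<p+n] ! i = G (p mod 3) n (orb (p div 3)) ! i"
    unfolding G_def using i by simp
qed

lemma billiard_range:
  "range (\<lambda>p. map (billiard_word m0 theta0) [p..<p+n]) =
     range (\<lambda>k. G 0 n (orb k)) \<union> range (\<lambda>k. G 1 n (orb k)) \<union> range (\<lambda>k. G 2 n (orb k))"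
  (is "?R = ?A \<union> ?B \<union> ?C")
proof
  show "?R \<subseteq> ?A \<union> ?B \<union> ?C"
  proof
    fix w assume "w \<in> ?R"
    then obtain p where "w = map (billiard_word m0 theta0) [p..<p+n]" by (rule rangeE)
    then have w: "w = G (p mod 3) n (orb (p div 3))" by (simp only: billiard_factor)
    have "p mod 3 = 0 \<or> p mod 3 = 1 \<or> p mod 3 = 2" by auto
    then show "w \<in> ?A \<union> ?B \<union> ?C"
    proof (elim disjE)
      assume h: "p mod 3 = 0"
      have "w \<in> ?A" unfolding w h by (rule rangeI)
      then show ?thesis by (rule UnI1[THEN UnI1])
    next
      assume h: "p mod 3 = 1"
      have "w \<in> ?B" unfolding w h by (rule rangeI)
      then show ?thesis by (rule UnI2[THEN UnI1])
    next
      assume h: "p mod 3 = 2"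
      have "w \<in> ?C" unfolding w h by (rule rangeI)
      then show ?thesis by (rule UnI2)
    qed
  qed
  have mem: "G r n (orb k) \<in> ?R" if "r < 3" for r k
  proof -
    have d: "(3 * k + r) mod 3 = r" "(3 * k + r) div 3 = k" using that by auto
    have "map (billiard_word m0 theta0) [3 * k + r..<3 * k + r + n] = G r n (orb k)"
      using billiard_factor[of "3 * k + r" n] unfolding d .
    moreover have "map (billiard_word m0 theta0) [3 * k + r..<3 * k + r + n] \<in> ?R" by (rule rangeI)
    ultimately show ?thesis by simp
  qed
  have sA: "?A \<subseteq> ?R"
  proof
    fix w assume "w \<in> ?A" then obtain k where "w = G 0 n (orb k)" by (rule rangeE)
    then show "w \<in> ?R" using mem[of 0 k] by simp
  qed
  have sB: "?B \<subseteq> ?R"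
  proof
    fix w assume "w \<in> ?B" then obtain k where "w = G 1 n (orb k)" by (rule rangeE)
    then show "w \<in> ?R" using mem[of 1 k] by simp
  qed
  have sC: "?C \<subseteq> ?R"
  proof
    fix w assume "w \<in> ?C" then obtain k where "w = G 2 n (orb k)" by (rule rangeE)
    then show "w \<in> ?R" using mem[of 2 k] by simp
  qed
  show "?A \<union> ?B \<union> ?C \<subseteq> ?R" using sA sB sC by (simp only: Un_least)
qed

lemma G_Obs:
  assumes c1: "\<And>i. i < n \<Longrightarrow> (r + i) mod 3 \<noteq> 0 \<Longrightarrow> e0 \<le> ed (r + i) \<and> ed (r + i) \<le> e1"
    and c2: "\<And>e. e0 \<le> e \<Longrightarrow> e \<le> e1 \<Longrightarrow> \<exists>i<n. (r + i) mod 3 \<noteq> 0 \<and> ed (r + i) = e"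
  shows "G r n x = G r n y \<longleftrightarrow> Obs e0 e1 x = Obs e0 e1 y"
proof -
  have b: "bl p x = bl p y \<longleftrightarrow> (p mod 3 \<noteq> 0 \<longrightarrow> ob (ed p) x = ob (ed p) y)" for p
    unfolding bl_def by auto
  have "G r n x = G r n y \<longleftrightarrow> (\<forall>i<n. bl (r + i) x = bl (r + i) y)"
    unfolding G_def by (auto simp: map_eq_conv)
  also have "\<dots> \<longleftrightarrow> (\<forall>e. e0 \<le> e \<and> e \<le> e1 \<longrightarrow> ob e x = ob e y)"
  proof
    assume h: "\<forall>i<n. bl (r + i) x = bl (r + i) y"
    show "\<forall>e. e0 \<le> e \<and> e \<le> e1 \<longrightarrow> ob e x = ob e y"
    proof (intro allI impI)
      fix e assume "e0 \<le> e \<and> e \<le> e1"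
      then obtain i where i: "i < n" "(r + i) mod 3 \<noteq> 0" "ed (r + i) = e" using c2 by blast
      then have "bl (r + i) x = bl (r + i) y" using h by blast
      then show "ob e x = ob e y" using i b by blast
    qed
  next
    assume h: "\<forall>e. e0 \<le> e \<and> e \<le> e1 \<longrightarrow> ob e x = ob e y"
    show "\<forall>i<n. bl (r + i) x = bl (r + i) y"
    proof (intro allI impI)
      fix i assume i: "i < n"
      show "bl (r + i) x = bl (r + i) y"
      proof (cases "(r + i) mod 3 = 0")
        case True then show ?thesis unfolding bl_def by simp
      next
        case False
        then have "e0 \<le> ed (r + i) \<and> ed (r + i) \<le> e1" using c1 i by blast
        then have "ob (ed (r + i)) x = ob (ed (r + i)) y" using h by blast
        then show ?thesis unfolding b by blast
      qed
    qed
  qed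
  also have "\<dots> \<longleftrightarrow> Obs e0 e1 x = Obs e0 e1 y"
    unfolding Obs_def by (auto simp: map_eq_conv)
  finally show ?thesis .
qed

lemma G_count:
  assumes "e0 \<le> e1"
    and c1: "\<And>i. i < n \<Longrightarrow> (r + i) mod 3 \<noteq> 0 \<Longrightarrow> e0 \<le> ed (r + i) \<and> ed (r + i) \<le> e1"
    and c2: "\<And>e. e0 \<le> e \<Longrightarrow> e \<le> e1 \<Longrightarrow> \<exists>i<n. (r + i) mod 3 \<noteq> 0 \<and> ed (r + i) = e"
  shows "card (range (\<lambda>k. G r n (orb k))) = e1 - e0 + 2"
proof -
  have "card (range (\<lambda>k. G r n (orb k))) = card (range (\<lambda>k. Obs e0 e1 (orb k)))"
    by (rule card_range_transfer) (rule G_Obs[OF c1 c2])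
  also have "\<dots> = e1 - e0 + 2" by (rule obs_count[OF assms(1)])
  finally show ?thesis .
qed

lemma P1: "(m::nat) < 3 \<Longrightarrow> m \<noteq> 0 \<Longrightarrow> b < 3 \<Longrightarrow> 3 * q + m \<le> 3 * a + b \<Longrightarrow> 2 * q + m - 1 \<le> 2 * a + b - 1"
  by arith
lemma P2: "(m::nat) < 3 \<Longrightarrow> m \<noteq> 0 \<Longrightarrow> 2 \<le> 3 * q + m \<Longrightarrow> 1 \<le> 2 * q + m - 1"
  by arith
lemma P4: "1 \<le> 3 * q + (m::nat) \<Longrightarrow> 1 \<le> 2 * q + m"
  by arith
lemma P3: "(d::nat) < 2 \<Longrightarrow> b < 3 \<Longrightarrow> 1 \<le> 2 * a + b \<Longrightarrow> 2 * c + d \<le> 2 * a + b - 1 \<Longrightarrow> 3 * c + d + 1 \<le> 3 * a + b"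
  by arith

lemma ed_le:
  assumes "p mod 3 \<noteq> 0" "p \<le> N"
  shows "ed p \<le> 2 * (N div 3) + N mod 3 - 1"
proof -
  have p: "p = 3 * (p div 3) + p mod 3" and N: "N = 3 * (N div 3) + N mod 3" by simp_all
  have "3 * (p div 3) + p mod 3 \<le> 3 * (N div 3) + N mod 3" using assms(2) p N by simp
  then show ?thesis unfolding ed_def using P1[of "p mod 3" "N mod 3" "p div 3" "N div 3"] assms(1) by simp
qed

lemma ed_ge1:
  assumes "p mod 3 \<noteq> 0" "2 \<le> p"
  shows "1 \<le> ed p"
proof -
  have p: "p = 3 * (p div 3) + p mod 3" by simp
  show ?thesis unfolding ed_def using P2[of "p mod 3" "p div 3"] assms p by simp
qed

lemma ed_wit:
  assumes "e \<le> 2 * (N div 3) + N mod 3 - 1" and N1: "1 \<le> N"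
  shows "e + e div 2 + 1 \<le> N" "(e + e div 2 + 1) mod 3 \<noteq> 0" "ed (e + e div 2 + 1) = e"
proof -
  define c where "c = e div 2"
  define d where "d = e mod 2"
  have e: "e = 2 * c + d" "d < 2" unfolding c_def d_def by simp_all
  have pe: "e + e div 2 + 1 = 3 * c + (d + 1)" unfolding c_def d_def by simp
  have "1 \<le> 3 * (N div 3) + N mod 3" using N1 by simp
  then have "1 \<le> 2 * (N div 3) + N mod 3" by (rule P4)
  then have "3 * c + d + 1 \<le> 3 * (N div 3) + N mod 3"
    using P3[of d "N mod 3" "N div 3" c] e assms by simp
  then show "e + e div 2 + 1 \<le> N" unfolding pe by simp
  have dm: "(3 * c + (d + 1)) div 3 = c" "(3 * c + (d + 1)) mod 3 = d + 1" using e(2) by auto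
  show "(e + e div 2 + 1) mod 3 \<noteq> 0" unfolding pe dm by simp
  show "ed (e + e div 2 + 1) = e" unfolding pe ed_def dm using e by simp
qed

lemma count_gen:
  assumes r: "r < 3" and n: "n \<ge> 2" and N: "N = r + n - 1"
  shows "card (range (\<lambda>k. G r n (orb k))) = (2 * (N div 3) + N mod 3 - 1) - (if r = 2 then 1 else 0) + 2"
proof (rule G_count)
  let ?e0 = "if r = 2 then 1 else 0::nat"
  let ?e1 = "2 * (N div 3) + N mod 3 - 1"
  show "?e0 \<le> ?e1"
  proof (cases "r = 2")
    case True
    then have "3 \<le> N" using n N by simp
    then have "1 \<le> N div 3" by simp
    then show ?thesis using True by simp
  qed simp
  show "?e0 \<le> ed (r + i) \<and> ed (r + i) \<le> ?e1" if "i < n" "(r + i) mod 3 \<noteq> 0" for i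
  proof
    show "ed (r + i) \<le> ?e1" using ed_le[of "r + i" N] that N by simp
    show "?e0 \<le> ed (r + i)"
    proof (cases "r = 2")
      case True
      then have "1 \<le> ed (r + i)" using ed_ge1[of "r + i"] that by simp
      then show ?thesis using True by simp
    qed simp
  qed
  show "\<exists>i<n. (r + i) mod 3 \<noteq> 0 \<and> ed (r + i) = e" if "?e0 \<le> e" "e \<le> ?e1" for e
  proof -
    have w: "e + e div 2 + 1 \<le> N" "(e + e div 2 + 1) mod 3 \<noteq> 0" "ed (e + e div 2 + 1) = e"
      using ed_wit[OF that(2)] N n by auto
    have rl: "r \<le> e + e div 2 + 1"
    proof (cases "r = 2")
      case True then have "1 \<le> e" using that by simp
      then show ?thesis using True by simp
    next
      case False then show ?thesis using r by simp
    qed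
    define i where "i = e + e div 2 + 1 - r"
    have ri: "r + i = e + e div 2 + 1" unfolding i_def using rl by simp
    have "i < n" using w(1) ri N n by simp
    then show ?thesis using w ri by auto
  qed
qed

lemma m32: "(3 * q + 2) mod 3 = (2::nat)" "(3 * q + 2) div 3 = q" "(3 * q + 1) mod 3 = 1"
  "(3 * q + 1) div 3 = q" "(3 * q + 0) mod 3 = 0" "(3 * q + 0) div 3 = q"
  by presburger+

lemma disj_ranges: "(\<And>k. P (f k)) \<Longrightarrow> (\<And>k. \<not> P (g k)) \<Longrightarrow> range f \<inter> range g = {}"
  by (auto; metis)

lemma G_nth0: "n \<ge> 2 \<Longrightarrow> G r n x ! 0 = bl r x" unfolding G_def by simp
lemma G_nth1: "n \<ge> 2 \<Longrightarrow> G r n x ! 1 = bl (r + 1) x" unfolding G_def by simp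

lemma billiard_complexity:
  assumes n: "n \<ge> 2"
  shows "complexity (factors (billiard_word m0 theta0)) n = 2 * n + 3"
proof -
  let ?A = "range (\<lambda>k. G 0 n (orb k))" and ?B = "range (\<lambda>k. G 1 n (orb k))" and ?C = "range (\<lambda>k. G 2 n (orb k))"
  define N0 where "N0 = n - 1"
  define N1 where "N1 = n"
  define N2 where "N2 = n + 1"
  have cA: "card ?A = (2 * (N0 div 3) + N0 mod 3 - 1) - 0 + 2" using count_gen[of 0 n N0] n unfolding N0_def by simp
  have cB: "card ?B = (2 * (N1 div 3) + N1 mod 3 - 1) - 0 + 2" using count_gen[of 1 n N1] n unfolding N1_def by simp
  have cC: "card ?C = (2 * (N2 div 3) + N2 mod 3 - 1) - 1 + 2" using count_gen[of 2 n N2] n unfolding N2_def by simp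
  have "0 < card ?A" unfolding cA by simp
  then have fA: "finite ?A" by (rule card_ge_0_finite)
  have "0 < card ?B" unfolding cB by simp
  then have fB: "finite ?B" by (rule card_ge_0_finite)
  have "0 < card ?C" unfolding cC by simp
  then have fC: "finite ?C" by (rule card_ge_0_finite)
  have la: "bl 0 x = LA" "bl 1 x \<noteq> LA" "bl 2 x \<noteq> LA" "bl 3 x = LA" "bl (Suc 0) x \<noteq> LA" for x unfolding bl_def by auto
  have dAB: "?A \<inter> ?B = {}" by (rule disj_ranges[where P = "\<lambda>w. w ! 0 = LA"]) (simp_all add: G_nth0[OF n] la)
  have dAC: "?A \<inter> ?C = {}" by (rule disj_ranges[where P = "\<lambda>w. w ! 0 = LA"]) (simp_all add: G_nth0[OF n] la)
  have g1: "G 1 n x ! 1 \<noteq> LA" "G 2 n x ! 1 = LA" for x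
    unfolding G_def bl_def using n by auto
  have dBC: "?B \<inter> ?C = {}" by (rule disj_ranges[where P = "\<lambda>w. w ! 1 \<noteq> LA"]) (use g1 in auto)
  have "card (?A \<union> ?B \<union> ?C) = card ?A + card ?B + card ?C"
  proof -
    have "card (?A \<union> ?B) = card ?A + card ?B" using card_Un_disjoint[OF fA fB dAB] .
    moreover have "(?A \<union> ?B) \<inter> ?C = {}" using dAC dBC by auto
    ultimately show ?thesis using card_Un_disjoint[of "?A \<union> ?B" ?C] fA fB fC by simp
  qed
  also have "\<dots> = 2 * n + 3"
  proof -
    define a where "a = n div 3"
    have na: "n = 3 * a + n mod 3" unfolding a_def by simp
    have "n mod 3 = 0 \<or> n mod 3 = 1 \<or> n mod 3 = 2" by auto
    then consider "n = 3 * a" | "n = 3 * a + 1" | "n = 3 * a + 2" using na by (elim disjE) auto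
    then show ?thesis
    proof cases
      case 1
      then have "a \<ge> 1" using n by simp
      then have ee: "N0 = 3 * (a - 1) + 2" "N1 = 3 * a + 0" "N2 = 3 * a + 1" unfolding N0_def N1_def N2_def using 1 by auto
      then have "N0 div 3 = a - 1" "N0 mod 3 = 2" "N1 div 3 = a" "N1 mod 3 = 0" "N2 div 3 = a" "N2 mod 3 = 1"
        by (simp_all only: ee m32)
      then show ?thesis unfolding cA cB cC using 1 \<open>a \<ge> 1\<close> by simp
    next
      case 2
      then have "a \<ge> 1" using n by simp
      then have ee: "N0 = 3 * a + 0" "N1 = 3 * a + 1" "N2 = 3 * a + 2" unfolding N0_def N1_def N2_def using 2 by auto
      then have "N0 div 3 = a" "N0 mod 3 = 0" "N1 div 3 = a" "N1 mod 3 = 1" "N2 div 3 = a" "N2 mod 3 = 2"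
        by (simp_all only: ee m32)
      then show ?thesis unfolding cA cB cC using 2 \<open>a \<ge> 1\<close> by simp
    next
      case 3
      then have ee: "N0 = 3 * a + 1" "N1 = 3 * a + 2" "N2 = 3 * (a + 1) + 0" unfolding N0_def N1_def N2_def by auto
      then have "N0 div 3 = a" "N0 mod 3 = 1" "N1 div 3 = a" "N1 mod 3 = 2" "N2 div 3 = a + 1" "N2 mod 3 = 0"
        by (simp_all only: ee m32)
      then show ?thesis unfolding cA cB cC using 3 by simp
    qed
  qed
  finally show ?thesis unfolding complexity_range billiard_range .
qed

theorem proposition3:
  shows "(\<forall>n::nat. complexity (factors (v_word m0)) n = 2 * n + 1) \<and>
         (\<forall>n::nat. n \<ge> 2 \<longrightarrow> complexity (factors (billiard_word m0 theta0)) n = 2 * n + 3)"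
  using v_complexity billiard_complexity by blast


end
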